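(* Let $G$ be a modification order graph (mo-graph) and let $C_0 \xrightarrow{mo} C_1 \xrightarrow{mo} \cdots \xrightarrow{mo} C_n$ be a path in $G$ such that $CV_{C_0} \le CV_{C_1} \le \cdots \le CV_{C_n}$. If any new edge is added to $G$ using the procedures Merge, AddEdge and AddRMWEdge, then the updated clock vectors satisfy $CV'_{C_0} \le CV'_{C_1} \le \cdots \le CV'_{C_n}$, where $CV'_{C_i} := CV_{C_i}$ whenever $CV_{C_i}$ is not changed by the addition.
   Context: An execution is a sequence of events performed by threads. Each event $E$ has a thread id $t_E$ and a unique sequence number $s_E$ taken from a global counter that is incremented by one at every event, so sequence numbers strictly increase along the execution. A clock vector is a function from thread ids to natural numbers, with $(CV_1 \cup CV_2)(t) = \max(CV_1(t), CV_2(t))$ and $CV_1 \le CV_2$ iff $CV_1(t) \le CV_2(t)$ for all $t$. The mo-graph has one node for each atomic store or atomic read-modify-write (RMW) executed so far. Edges only connect nodes accessing the same memory location. Each node $X$ stores a thread id $X.tid$, a set $X.edges$ of successor nodes (its outgoing mo edges), a field $X.rmw$ (a node or null; an rmw edge from $X$ to $X.rmw$ indicates that RMW $X.rmw$ reads from $X$), and a clock vector $X.cv$, also written $CV_X$. When the node for a store $A$ is created, its clock vector is $\perp_{CV_A} = \lambda t.\ (s_A \text{ if } t = t_A \text{ else } 0)$. Edges are added only by the following procedures. Merge(dst, src): if $src.cv \le dst.cv$ return false; otherwise set $dst.cv := dst.cv \cup src.cv$ and return true. AddEdge(from, to): let mustAdd be true iff ($from.rmw = to$ or $from.tid = to.tid$).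 If $from.cv \le to.cv$ and not mustAdd, return. While $from.rmw \ne$ null: let $next := from.rmw$; if $next = to$ stop the loop; otherwise $from := next$. Add $to$ to $from.edges$. If Merge(to, from) returns true, then let $Q := \{to\}$ and while $Q$ is nonempty remove a node $node$ from $Q$ and for each $dst \in node.edges$, if Merge(dst, node) returns true add $dst$ to $Q$. AddRMWEdge(from, rmw): set $from.rmw := rmw$; for each $dst \in from.edges$ with $dst \ne rmw$ add $dst$ to $rmw.edges$; set $from.edges := \emptyset$; call AddEdge(from, rmw). A path $X \xrightarrow{mo} Y$ means $Y \in X.edges$. *)

theory Defs
  imports Main
begin

text \<open>Clock vectors are functions 't \<Rightarrow> nat; the library order on functions is the
  pointwise order and sup is the pointwise max, exactly as in the paper.\<close>

record ('n, 't) mo_graph =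
  tid :: "'n \<Rightarrow> 't"
  edges :: "'n \<Rightarrow> 'n set"
  rmw :: "'n \<Rightarrow> 'n option"   \<comment> \<open>None = null\<close>
  cv :: "'n \<Rightarrow> 't \<Rightarrow> nat"

definition merge :: "'n \<Rightarrow> 'n \<Rightarrow> ('n, 't) mo_graph \<Rightarrow> bool \<times> ('n, 't) mo_graph" where
  "merge dst src G =
     (if cv G src \<le> cv G dst then (False, G)
      else (True, G\<lparr>cv := (cv G)(dst := sup (cv G dst) (cv G src))\<rparr>))"

text \<open>The inner loop "for each dst in node.edges: if Merge(dst,node) then add dst to Q",
  iterating over the (snapshot) set R of remaining successors in an arbitrary order.
  merge_each G node R Q G' Q' : starting from G and worklist Q, ending in G' and Q'.\<close>
inductive merge_each ::
  "('n, 't) mo_graph \<Rightarrow> 'n \<Rightarrow> 'n set \<Rightarrow> 'n set \<Rightarrow> ('n, 't) mo_graph \<Rightarrow> 'n set \<Rightarrow> bool" where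
  finish: "merge_each G node {} Q G Q"
| step: "\<lbrakk> dst \<in> R; merge dst node G = (b, G1);
           merge_each G1 node (R - {dst}) (if b then insert dst Q else Q) G2 Q2 \<rbrakk>
         \<Longrightarrow> merge_each G node R Q G2 Q2"

text \<open>The worklist loop "while Q nonempty: remove a node from Q and process it".\<close>
inductive propagate :: "('n, 't) mo_graph \<Rightarrow> 'n set \<Rightarrow> ('n, 't) mo_graph \<Rightarrow> bool" where
  empty: "propagate G {} G"
| step: "\<lbrakk> node \<in> Q; merge_each G node (edges G node) (Q - {node}) G1 Q1;
           propagate G1 Q1 G2 \<rbrakk> \<Longrightarrow> propagate G Q G2"

text \<open>The loop "while from.rmw \<noteq> null: next := from.rmw; if next = to stop; else from := next";
  follow_rmw G to x y: starting with from = x the loop ends with from = y.\<close>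
inductive follow_rmw :: "('n, 't) mo_graph \<Rightarrow> 'n \<Rightarrow> 'n \<Rightarrow> 'n \<Rightarrow> bool" where
  null: "rmw G x = None \<Longrightarrow> follow_rmw G to x x"
| hit: "rmw G x = Some to \<Longrightarrow> follow_rmw G to x x"
| advance: "\<lbrakk> rmw G x = Some nxt; nxt \<noteq> to; follow_rmw G to nxt y \<rbrakk> \<Longrightarrow> follow_rmw G to x y"

definition must_add :: "('n, 't) mo_graph \<Rightarrow> 'n \<Rightarrow> 'n \<Rightarrow> bool" where
  "must_add G fr to \<longleftrightarrow> rmw G fr = Some to \<or> tid G fr = tid G to"

inductive add_edge :: "('n, 't) mo_graph \<Rightarrow> 'n \<Rightarrow> 'n \<Rightarrow> ('n, 't) mo_graph \<Rightarrow> bool" where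
  skip: "\<lbrakk> cv G fr \<le> cv G to; \<not> must_add G fr to \<rbrakk> \<Longrightarrow> add_edge G fr to G"
| nochange: "\<lbrakk> \<not> (cv G fr \<le> cv G to \<and> \<not> must_add G fr to); follow_rmw G to fr f;
              merge to f (G\<lparr>edges := (edges G)(f := insert to (edges G f))\<rparr>) = (False, G2) \<rbrakk>
             \<Longrightarrow> add_edge G fr to G2"
| changed: "\<lbrakk> \<not> (cv G fr \<le> cv G to \<and> \<not> must_add G fr to); follow_rmw G to fr f;
              merge to f (G\<lparr>edges := (edges G)(f := insert to (edges G f))\<rparr>) = (True, G2);
              propagate G2 {to} G3 \<rbrakk>
             \<Longrightarrow> add_edge G fr to G3"

text \<open>AddRMWEdge(from, rmw). The updates are performed in the order of the paper
  (the edges of from are copied to rmw first, then from.edges is cleared).\<close>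
inductive add_rmw_edge :: "('n, 't) mo_graph \<Rightarrow> 'n \<Rightarrow> 'n \<Rightarrow> ('n, 't) mo_graph \<Rightarrow> bool" where
  "add_edge (G\<lparr>rmw := (rmw G)(fr := Some r),
               edges := ((edges G)(r := edges G r \<union> (edges G fr - {r})))(fr := {})\<rparr>) fr r G'
   \<Longrightarrow> add_rmw_edge G fr r G'"

end

theory Submission
  imports Defs
begin

lemma merge_facts:
  assumes "merge dst src G = (b, G1)"
  shows "edges G1 = edges G \<and> (b \<longleftrightarrow> \<not> cv G src \<le> cv G dst) \<and>
         cv G1 = (if b then (cv G)(dst := sup (cv G dst) (cv G src)) else cv G)"
  using assms unfolding merge_def by (auto split: if_splits)

lemma merge_each_facts:
  assumes "merge_each G node R Q G' Q'"
  shows "edges G' = edges G \<and> Q \<subseteq> Q' \<and> (\<forall>X. cv G X \<le> cv G' X) \<and>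
         (\<forall>X. cv G' X \<noteq> cv G X \<longrightarrow> X \<in> Q') \<and> cv G' node = cv G node \<and>
         (\<forall>d\<in>R. cv G' node \<le> cv G' d)"
  using assms
proof (induction rule: merge_each.induct)
  case (finish G node Q)
  then show ?case by auto
next
  case (step dst R node G b G1 Q G2 Q2)
  note m = merge_facts[OF step.hyps(2)]
  have nd: "cv G1 node = cv G node"
    using m by (auto split: if_splits)
  have mono1: "\<forall>X. cv G X \<le> cv G1 X" using m by auto
  have ch1: "\<forall>X. cv G1 X \<noteq> cv G X \<longrightarrow> X = dst \<and> b" using m by (auto split: if_splits)
  have d1: "cv G1 node \<le> cv G1 dst"
    using m nd by (auto split: if_splits)
  show ?case
  proof (intro conjI)
    show "edges G2 = edges G" using step.IH m by simp
    show "Q \<subseteq> Q2" using step.IH by (auto split: if_splits)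
    show "\<forall>X. cv G X \<le> cv G2 X" using step.IH mono1 order_trans by metis
    show "\<forall>X. cv G2 X \<noteq> cv G X \<longrightarrow> X \<in> Q2"
    proof (intro allI impI)
      fix X assume "cv G2 X \<noteq> cv G X"
      then have "cv G2 X \<noteq> cv G1 X \<or> cv G1 X \<noteq> cv G X" by auto
      then show "X \<in> Q2"
      proof
        assume "cv G2 X \<noteq> cv G1 X" then show ?thesis using step.IH by auto
      next
        assume "cv G1 X \<noteq> cv G X" then have "X = dst \<and> b" using ch1 by auto
        then show ?thesis using step.IH by auto
      qed
    qed
    show "cv G2 node = cv G node" using step.IH nd by simp
    show "\<forall>d\<in>R. cv G2 node \<le> cv G2 d"
    proof
      fix d assume "d \<in> R"
      show "cv G2 node \<le> cv G2 d"
      proof (cases "d = dst")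
        case True
        then show ?thesis using step.IH nd d1 order_trans by metis
      next
        case False
        then show ?thesis using step.IH \<open>d \<in> R\<close> by auto
      qed
    qed
  qed
qed

definition inv :: "('n \<times> 'n) set \<Rightarrow> ('n, 't) mo_graph \<Rightarrow> 'n set \<Rightarrow> bool" where
  "inv E G Q \<longleftrightarrow> (\<forall>X Y. (X, Y) \<in> E \<longrightarrow> Y \<in> edges G X \<and> (cv G X \<le> cv G Y \<or> X \<in> Q))"

lemma propagate_inv:
  assumes "propagate G Q G'" "inv E G Q"
  shows "inv E G' {}"
  using assms
proof (induction rule: propagate.induct)
  case (empty G)
  then show ?case by simp
next
  case (step node Q G G1 Q1 G2)
  note f = merge_each_facts[OF step.hyps(2)]
  have "inv E G1 Q1"
    unfolding inv_def
  proof (intro allI impI conjI)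
    fix X Y assume e: "(X, Y) \<in> E"
    then have y: "Y \<in> edges G X" and c: "cv G X \<le> cv G Y \<or> X \<in> Q"
      using step.prems unfolding inv_def by auto
    show "Y \<in> edges G1 X" using y f by simp
    show "cv G1 X \<le> cv G1 Y \<or> X \<in> Q1"
    proof (cases "X \<in> Q - {node}")
      case True then show ?thesis using f by auto
    next
      case False
      show ?thesis
      proof (cases "X = node")
        case True then show ?thesis using f y by auto
      next
        case False2: False
        with False c have le: "cv G X \<le> cv G Y" by auto
        show ?thesis
        proof (cases "cv G1 X = cv G X")
          case True
          then show ?thesis using le f order_trans by metis
        next
          case False
          then show ?thesis using f by auto
        qed
      qed
    qed
  qed
  then show ?case using step.IH by simp
qed

lemma propagate_key:
  assumes "propagate G2 {to} G3" "Y \<in> edges G2 X" "cv G2 X \<le> cv G2 Y \<or> X = to"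
  shows "cv G3 X \<le> cv G3 Y"
proof -
  define E where "E = {(X, Y). Y \<in> edges G2 X \<and> (cv G2 X \<le> cv G2 Y \<or> X = to)}"
  have "inv E G2 {to}" unfolding inv_def E_def by auto
  then have "inv E G3 {}" using propagate_inv assms(1) by blast
  then show ?thesis using assms(2,3) unfolding inv_def E_def by auto
qed

lemma add_edge_cases:
  assumes "add_edge G0 fr to G3"
  shows "cv G3 = cv G0 \<or> (\<exists>f G2. f \<noteq> to \<and> follow_rmw G0 to fr f \<and>
     edges G2 = (edges G0)(f := insert to (edges G0 f)) \<and>
     cv G2 = (cv G0)(to := sup (cv G0 to) (cv G0 f)) \<and> propagate G2 {to} G3)"
  using assms
proof (cases rule: add_edge.cases)
  case skip then show ?thesis by simp
next
  case (nochange f)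
  then show ?thesis using merge_facts[OF nochange(3)] by (simp split: if_splits)
next
  case (changed f G2)
  note m = merge_facts[OF changed(3)]
  have "f \<noteq> to" using m by auto
  then show ?thesis using m changed by auto
qed

lemma follow_hit:
  assumes "follow_rmw G to fr f" "rmw G fr = Some to"
  shows "f = fr"
  using assms by (cases rule: follow_rmw.cases) auto

theorem lemma1:
  fixes G G' :: "('n, 't) mo_graph" and C :: "nat \<Rightarrow> 'n" and n :: nat
  assumes path: "\<forall>i<n. C (Suc i) \<in> edges G (C i)"
    and mono: "\<forall>i<n. cv G (C i) \<le> cv G (C (Suc i))"
    and upd: "(\<exists>a b. add_edge G a b G') \<or> (\<exists>a b. add_rmw_edge G a b G')"
  shows "\<forall>i<n. cv G' (C i) \<le> cv G' (C (Suc i))"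
  using upd
proof
  assume "\<exists>a b. add_edge G a b G'"
  then obtain fr to where ae: "add_edge G fr to G'" by blast
  from add_edge_cases[OF ae] show ?thesis
  proof
    assume "cv G' = cv G" then show ?thesis using mono by simp
  next
    assume "\<exists>f G2. f \<noteq> to \<and> follow_rmw G to fr f \<and>
     edges G2 = (edges G)(f := insert to (edges G f)) \<and>
     cv G2 = (cv G)(to := sup (cv G to) (cv G f)) \<and> propagate G2 {to} G'"
    then obtain f G2 where h: "f \<noteq> to" "edges G2 = (edges G)(f := insert to (edges G f))"
      "cv G2 = (cv G)(to := sup (cv G to) (cv G f))" "propagate G2 {to} G'" by blast
    show ?thesis
    proof (intro allI impI)
      fix i assume i: "i < n"
      have e: "C (Suc i) \<in> edges G2 (C i)" using path i h(2) by auto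
      have "cv G2 (C i) \<le> cv G2 (C (Suc i)) \<or> C i = to"
      proof (cases "C i = to")
        case False
        have "cv G (C (Suc i)) \<le> cv G2 (C (Suc i))" using h(3) by auto
        then show ?thesis using False h(3) mono i order_trans by fastforce
      qed simp
      then show "cv G' (C i) \<le> cv G' (C (Suc i))" using propagate_key[OF h(4) e] by blast
    qed
  qed
next
  assume "\<exists>a b. add_rmw_edge G a b G'"
  then obtain fr r where ar: "add_rmw_edge G fr r G'" by blast
  define G0 where "G0 = G\<lparr>rmw := (rmw G)(fr := Some r),
               edges := ((edges G)(r := edges G r \<union> (edges G fr - {r})))(fr := {})\<rparr>"
  have ae: "add_edge G0 fr r G'" using ar unfolding G0_def by (cases rule: add_rmw_edge.cases) auto
  have cv0: "cv G0 = cv G" unfolding G0_def by simp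
  have rm0: "rmw G0 fr = Some r" unfolding G0_def by simp
  from add_edge_cases[OF ae] show ?thesis
  proof
    assume "cv G' = cv G0" then show ?thesis using mono cv0 by simp
  next
    assume "\<exists>f G2. f \<noteq> r \<and> follow_rmw G0 r fr f \<and>
     edges G2 = (edges G0)(f := insert r (edges G0 f)) \<and>
     cv G2 = (cv G0)(r := sup (cv G0 r) (cv G0 f)) \<and> propagate G2 {r} G'"
    then obtain f G2 where h: "f \<noteq> r" "follow_rmw G0 r fr f"
      "edges G2 = (edges G0)(f := insert r (edges G0 f))"
      "cv G2 = (cv G0)(r := sup (cv G0 r) (cv G0 f))" "propagate G2 {r} G'" by blast
    have ff: "f = fr" using follow_hit[OF h(2) rm0] .
    have nfr: "fr \<noteq> r" using h(1) ff by simp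
    have ed0: "\<And>X. edges G0 X = (if X = fr then {} else if X = r then edges G r \<union> (edges G fr - {r}) else edges G X)"
      unfolding G0_def using nfr by auto
    have ed2: "\<And>X. edges G2 X = (if X = fr then {r} else if X = r then edges G r \<union> (edges G fr - {r}) else edges G X)"
      using h(3) ff ed0 by auto
    have cv2: "cv G2 = (cv G)(r := sup (cv G r) (cv G fr))" using h(4) ff cv0 by simp
    have frr: "cv G' fr \<le> cv G' r"
    proof -
      have "r \<in> edges G2 fr" using ed2 by simp
      moreover have "cv G2 fr \<le> cv G2 r" using cv2 nfr by simp
      ultimately show ?thesis using propagate_key[OF h(5)] by blast
    qed
    show ?thesis
    proof (intro allI impI)
      fix i assume i: "i < n"
      show "cv G' (C i) \<le> cv G' (C (Suc i))"
      proof (cases "C i = fr")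
        case True
        show ?thesis
        proof (cases "C (Suc i) = r")
          case True2: True
          then show ?thesis using True frr by simp
        next
          case False
          have "C (Suc i) \<in> edges G2 r" using ed2 nfr path i True False by auto
          then have "cv G' r \<le> cv G' (C (Suc i))" using propagate_key[OF h(5)] by blast
          then show ?thesis using frr True order_trans by metis
        qed
      next
        case False
        have e: "C (Suc i) \<in> edges G2 (C i)" using ed2 path i False by auto
        have "cv G2 (C i) \<le> cv G2 (C (Suc i)) \<or> C i = r"
        proof (cases "C i = r")
          case False
          have "cv G (C (Suc i)) \<le> cv G2 (C (Suc i))" using cv2 by auto
          then show ?thesis using False cv2 mono i order_trans by fastforce
        qed simp
        then show ?thesis using propagate_key[OF h(5) e] by blast
      qed
    qed
  qed
qed

end
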